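(* The finitely generated objects of the category $\mathsf{Alex}$ of Alexandroff-discrete spaces are precisely the finite topological spaces. The finitely generated objects of the category $\mathsf{Alex}_0$ of Alexandroff-discrete T$_0$-spaces are precisely the finite T$_0$-spaces.
   Context: A topological space is Alexandroff-discrete if arbitrary intersections of open sets are open. $\mathsf{Alex}$ and $\mathsf{Alex}_0$ are the full subcategories of $\mathsf{Top}$ of Alexandroff-discrete spaces and of Alexandroff-discrete T$_0$-spaces, respectively. An object $X$ of a category $\mathcal{C}$ is finitely generated if for every directed diagram $(Z_i)_{i\in I}$ in $\mathcal{C}$ (indexed by a directed poset, i.e. every finite subset has an upper bound) all of whose connecting morphisms $z_{i,j}$ are monomorphisms, with colimit cocone $c_i:Z_i\to Z$ in $\mathcal{C}$, every morphism $f:X\to Z$ factorizes as $f=c_i\cdot g$ for some $i$ and $g:X\to Z_i$, and if also $f=c_i\cdot g'$ then $z_{i,j}\cdot g=z_{i,j}\cdot g'$ for some connecting morphism $z_{i,j}$. *)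

theory Defs
  imports "HOL-Analysis.Analysis"
begin

text \<open>Alexandroff-discrete: arbitrary (nonempty) intersections of open sets are open.
  The empty intersection is the whole space, which is always open.\<close>
definition alexandroff_space :: "'a topology \<Rightarrow> bool" where
  "alexandroff_space X \<longleftrightarrow>
     (\<forall>\<U>. \<U> \<noteq> {} \<and> (\<forall>U\<in>\<U>. openin X U) \<longrightarrow> openin X (\<Inter>\<U>))"

text \<open>Monomorphism in the full subcategory of Top given by the predicate C
  (objects of C are spaces on the carrier type 'b; morphisms are continuous maps,
  identified when they agree on the topspace of the domain).\<close>
definition mono_in :: "('b topology \<Rightarrow> bool) \<Rightarrow> 'b topology \<Rightarrow> 'b topology \<Rightarrow> ('b \<Rightarrow> 'b) \<Rightarrow> bool" where
  "mono_in C A B m \<longleftrightarrow> continuous_map A B m \<and>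
     (\<forall>W g h. C W \<and> continuous_map W A g \<and> continuous_map W A h \<and>
        (\<forall>x\<in>topspace W. m (g x) = m (h x)) \<longrightarrow> (\<forall>x\<in>topspace W. g x = h x))"

definition directed_mono_diagram ::
  "('b topology \<Rightarrow> bool) \<Rightarrow> 'i set \<Rightarrow> ('i \<Rightarrow> 'i \<Rightarrow> bool) \<Rightarrow> ('i \<Rightarrow> 'b topology)
     \<Rightarrow> ('i \<Rightarrow> 'i \<Rightarrow> 'b \<Rightarrow> 'b) \<Rightarrow> bool" where
  "directed_mono_diagram C I le Z z \<longleftrightarrow>
     (\<forall>i\<in>I. le i i) \<and>
     (\<forall>i\<in>I. \<forall>j\<in>I. le i j \<and> le j i \<longrightarrow> i = j) \<and>
     (\<forall>i\<in>I. \<forall>j\<in>I. \<forall>k\<in>I. le i j \<and> le j k \<longrightarrow> le i k) \<and>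
     (\<forall>F. finite F \<and> F \<subseteq> I \<longrightarrow> (\<exists>u\<in>I. \<forall>i\<in>F. le i u)) \<and>
     (\<forall>i\<in>I. C (Z i)) \<and>
     (\<forall>i\<in>I. \<forall>j\<in>I. le i j \<longrightarrow> mono_in C (Z i) (Z j) (z i j)) \<and>
     (\<forall>i\<in>I. \<forall>x\<in>topspace (Z i). z i i x = x) \<and>
     (\<forall>i\<in>I. \<forall>j\<in>I. \<forall>k\<in>I. le i j \<and> le j k \<longrightarrow>
        (\<forall>x\<in>topspace (Z i). z j k (z i j x) = z i k x))"

definition is_colimit_in ::
  "('b topology \<Rightarrow> bool) \<Rightarrow> 'i set \<Rightarrow> ('i \<Rightarrow> 'i \<Rightarrow> bool) \<Rightarrow> ('i \<Rightarrow> 'b topology)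
     \<Rightarrow> ('i \<Rightarrow> 'i \<Rightarrow> 'b \<Rightarrow> 'b) \<Rightarrow> 'b topology \<Rightarrow> ('i \<Rightarrow> 'b \<Rightarrow> 'b) \<Rightarrow> bool" where
  "is_colimit_in C I le Z z L c \<longleftrightarrow>
     C L \<and>
     (\<forall>i\<in>I. continuous_map (Z i) L (c i)) \<and>
     (\<forall>i\<in>I. \<forall>j\<in>I. le i j \<longrightarrow> (\<forall>x\<in>topspace (Z i). c j (z i j x) = c i x)) \<and>
     (\<forall>W d. C W \<and> (\<forall>i\<in>I. continuous_map (Z i) W (d i)) \<and>
        (\<forall>i\<in>I. \<forall>j\<in>I. le i j \<longrightarrow> (\<forall>x\<in>topspace (Z i). d j (z i j x) = d i x)) \<longrightarrow>
        (\<exists>u. continuous_map L W u \<and>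
             (\<forall>i\<in>I. \<forall>x\<in>topspace (Z i). u (c i x) = d i x) \<and>
             (\<forall>u'. continuous_map L W u' \<and>
                   (\<forall>i\<in>I. \<forall>x\<in>topspace (Z i). u' (c i x) = d i x) \<longrightarrow>
                   (\<forall>y\<in>topspace L. u' y = u y))))"

text \<open>Finitely generated object X of C, where diagrams are indexed by subsets of
  the type 'i and have vertices (in C) on the carrier type 'b.\<close>
definition fin_gen :: "'i itself \<Rightarrow> ('b topology \<Rightarrow> bool) \<Rightarrow> 'a topology \<Rightarrow> bool" where
  "fin_gen _ C X \<longleftrightarrow>
     (\<forall>(I::'i set) le Z z L c.
        directed_mono_diagram C I le Z z \<and> is_colimit_in C I le Z z L c \<longrightarrow>
        (\<forall>f. continuous_map X L f \<longrightarrow>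
           (\<exists>i\<in>I. \<exists>g. continuous_map X (Z i) g \<and> (\<forall>x\<in>topspace X. f x = c i (g x))) \<and>
           (\<forall>i\<in>I. \<forall>g g'. continuous_map X (Z i) g \<and> continuous_map X (Z i) g' \<and>
               (\<forall>x\<in>topspace X. f x = c i (g x)) \<and> (\<forall>x\<in>topspace X. f x = c i (g' x)) \<longrightarrow>
               (\<exists>j\<in>I. le i j \<and> (\<forall>x\<in>topspace X. z i j (g x) = z i j (g' x))))))"

definition alex0_space :: "'a topology \<Rightarrow> bool" where
  "alex0_space X \<longleftrightarrow> alexandroff_space X \<and> t0_space X"

end

theory Submission
  imports Defs
begin


definition spc :: "'a topology \<Rightarrow> 'a \<Rightarrow> 'a \<Rightarrow> bool" where
  "spc X x y \<longleftrightarrow> x \<in> topspace X \<and> y \<in> topspace X \<and> (\<forall>U. openin X U \<and> x \<in> U \<longrightarrow> y \<in> U)"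

lemma spc_refl: "x \<in> topspace X \<Longrightarrow> spc X x x"
  by (simp add: spc_def)

lemma spc_trans: "spc X x y \<Longrightarrow> spc X y w \<Longrightarrow> spc X x w"
  by (simp add: spc_def)

lemma cont_spc: "continuous_map X Y f \<Longrightarrow> spc X x y \<Longrightarrow> spc Y (f x) (f y)"
  unfolding spc_def continuous_map_def by (auto simp: Pi_iff)

lemma alex_openI:
  assumes A: "alexandroff_space X" and U: "U \<subseteq> topspace X"
    and up: "\<And>x y. x \<in> U \<Longrightarrow> spc X x y \<Longrightarrow> y \<in> U"
  shows "openin X U"
proof -
  define N where "N x = \<Inter>{V. openin X V \<and> x \<in> V}" for x
  have "openin X (N x)" if "x \<in> U" for x
  proof -
    have "topspace X \<in> {V. openin X V \<and> x \<in> V}" using that U by auto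
    then have ne: "{V. openin X V \<and> x \<in> V} \<noteq> {}" by blast
    show ?thesis
      using A[unfolded alexandroff_space_def, rule_format, of "{V. openin X V \<and> x \<in> V}"] ne
      by (simp add: N_def)
  qed
  moreover have "N x \<subseteq> U" if "x \<in> U" for x
  proof
    fix y assume "y \<in> N x"
    then have "spc X x y" using that U unfolding N_def spc_def by auto
    then show "y \<in> U" using up that by blast
  qed
  moreover have "x \<in> N x" for x unfolding N_def by auto
  ultimately have "U = \<Union>(N ` U)" by blast
  moreover have "openin X (\<Union>(N ` U))" using \<open>\<And>x. x \<in> U \<Longrightarrow> openin X (N x)\<close> by blast
  ultimately show ?thesis by simp
qed

lemma alex_contI:
  assumes A: "alexandroff_space X" and im: "\<And>x. x \<in> topspace X \<Longrightarrow> f x \<in> topspace Y"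
    and mono: "\<And>x y. spc X x y \<Longrightarrow> spc Y (f x) (f y)"
  shows "continuous_map X Y f"
  unfolding continuous_map_def
proof (intro conjI allI impI)
  show "f \<in> topspace X \<rightarrow> topspace Y" using im by auto
  fix V assume V: "openin Y V"
  show "openin X {x \<in> topspace X. f x \<in> V}"
  proof (rule alex_openI[OF A])
    fix x y assume "x \<in> {x \<in> topspace X. f x \<in> V}" "spc X x y"
    then show "y \<in> {x \<in> topspace X. f x \<in> V}"
      using mono[of x y] V unfolding spc_def by auto
  qed auto
qed

lemma finite_alex: "finite (topspace X) \<Longrightarrow> alexandroff_space X"
  unfolding alexandroff_space_def
proof (intro allI impI)
  fix \<U> assume f: "finite (topspace X)" and h: "\<U> \<noteq> {} \<and> (\<forall>U\<in>\<U>. openin X U)"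
  have "\<U> \<subseteq> Pow (topspace X)" using h openin_subset by auto
  then have "finite \<U>" by (rule finite_subset) (simp add: f)
  then show "openin X (\<Inter>\<U>)" by (rule openin_Inter) (use h in auto)
qed

lemma alex_subtopology:
  assumes "alexandroff_space X" shows "alexandroff_space (subtopology X S)"
  unfolding alexandroff_space_def
proof (intro allI impI)
  fix \<U> assume h: "\<U> \<noteq> {} \<and> (\<forall>U\<in>\<U>. openin (subtopology X S) U)"
  then have "\<forall>U\<in>\<U>. \<exists>T. openin X T \<and> U = T \<inter> S" by (simp add: openin_subtopology)
  from bchoice[OF this] obtain T where T: "\<forall>U\<in>\<U>. openin X (T U) \<and> U = T U \<inter> S" by blast
  have "openin X (\<Inter>(T ` \<U>))"
  proof (rule assms[unfolded alexandroff_space_def, rule_format])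
    show "T ` \<U> \<noteq> {} \<and> (\<forall>U\<in>T ` \<U>. openin X U)" using h T by auto
  qed
  moreover have "\<Inter>\<U> = \<Inter>(T ` \<U>) \<inter> S"
  proof (rule set_eqI)
    fix y
    obtain U0 where U0: "U0 \<in> \<U>" using h by blast
    show "y \<in> \<Inter>\<U> \<longleftrightarrow> y \<in> \<Inter>(T ` \<U>) \<inter> S"
    proof
      assume y: "y \<in> \<Inter>\<U>"
      have "y \<in> S" using y U0 T by blast
      moreover have "y \<in> T U" if "U \<in> \<U>" for U using y that T by blast
      ultimately show "y \<in> \<Inter>(T ` \<U>) \<inter> S" by blast
    next
      assume y: "y \<in> \<Inter>(T ` \<U>) \<inter> S"
      have "y \<in> U" if "U \<in> \<U>" for U using y that T by blast
      then show "y \<in> \<Inter>\<U>" by blast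
    qed
  qed
  ultimately show "openin (subtopology X S) (\<Inter>\<U>)" unfolding openin_subtopology by blast
qed

lemma t0_spc: assumes "t0_space X" "spc X x y" "spc X y x" shows "x = y"
proof (rule ccontr)
  assume "x \<noteq> y"
  moreover have "x \<in> topspace X" "y \<in> topspace X" using assms(2) by (auto simp: spc_def)
  ultimately obtain U where U: "openin X U" "x \<notin> U \<longleftrightarrow> y \<in> U"
    using assms(1) unfolding t0_space_def by blast
  show False
  proof (cases "x \<in> U")
    case True then show False using U assms(2) unfolding spc_def by blast
  next
    case False then show False using U assms(3) unfolding spc_def by blast
  qed
qed

definition sierp :: "'a \<Rightarrow> 'a \<Rightarrow> 'a topology" where
  "sierp a b = topology (\<lambda>U. U \<subseteq> {a,b} \<and> (b \<in> U \<longrightarrow> a \<in> U))"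

definition indisc :: "'a \<Rightarrow> 'a \<Rightarrow> 'a topology" where
  "indisc a b = topology (\<lambda>U. U \<subseteq> {a,b} \<and> (a \<in> U \<longleftrightarrow> b \<in> U))"

lemma openin_sierp: "openin (sierp a b) U \<longleftrightarrow> U \<subseteq> {a,b} \<and> (b \<in> U \<longrightarrow> a \<in> U)"
proof -
  have "istopology (\<lambda>U. U \<subseteq> {a,b} \<and> (b \<in> U \<longrightarrow> a \<in> U))"
  proof -
    have 1: "S \<inter> T \<subseteq> {a,b} \<and> (b \<in> (S \<inter> T) \<longrightarrow> a \<in> (S \<inter> T))" if "S \<subseteq> {a,b} \<and> (b \<in> S \<longrightarrow> a \<in> S)" "T \<subseteq> {a,b} \<and> (b \<in> T \<longrightarrow> a \<in> T)" for S T
      using that by auto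
    have 2: "\<Union>KK \<subseteq> {a,b} \<and> (b \<in> (\<Union>KK) \<longrightarrow> a \<in> (\<Union>KK))" if "\<forall>K\<in>KK. K \<subseteq> {a,b} \<and> (b \<in> K \<longrightarrow> a \<in> K)" for KK
      using that by (simp add: Union_least; blast)
    show ?thesis unfolding istopology_def using 1 2 by blast
  qed
  then show ?thesis unfolding sierp_def by simp
qed

lemma openin_indisc: "openin (indisc a b) U \<longleftrightarrow> U \<subseteq> {a,b} \<and> (a \<in> U \<longleftrightarrow> b \<in> U)"
proof -
  have "istopology (\<lambda>U. U \<subseteq> {a,b} \<and> (a \<in> U \<longleftrightarrow> b \<in> U))"
  proof -
    have 1: "S \<inter> T \<subseteq> {a,b} \<and> (a \<in> (S \<inter> T) \<longleftrightarrow> b \<in> (S \<inter> T))" if "S \<subseteq> {a,b} \<and> (a \<in> S \<longleftrightarrow> b \<in> S)" "T \<subseteq> {a,b} \<and> (a \<in> T \<longleftrightarrow> b \<in> T)" for S T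
      using that by auto
    have 2: "\<Union>KK \<subseteq> {a,b} \<and> (a \<in> (\<Union>KK) \<longleftrightarrow> b \<in> (\<Union>KK))" if "\<forall>K\<in>KK. K \<subseteq> {a,b} \<and> (a \<in> K \<longleftrightarrow> b \<in> K)" for KK
      using that by (simp add: Union_least; blast)
    show ?thesis unfolding istopology_def using 1 2 by blast
  qed
  then show ?thesis unfolding indisc_def by simp
qed

lemma topspace_sierp[simp]: "topspace (sierp a b) = {a,b}"
proof
  show "topspace (sierp a b) \<subseteq> {a,b}" unfolding topspace_def openin_sierp by auto
  show "{a,b} \<subseteq> topspace (sierp a b)" unfolding topspace_def
    using openin_sierp[of a b "{a,b}"] by auto
qed

lemma topspace_indisc[simp]: "topspace (indisc a b) = {a,b}"
proof
  show "topspace (indisc a b) \<subseteq> {a,b}" unfolding topspace_def openin_indisc by auto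
  show "{a,b} \<subseteq> topspace (indisc a b)" unfolding topspace_def
    using openin_indisc[of a b "{a,b}"] by auto
qed

lemma sierp_alex: "alexandroff_space (sierp a b)"
  by (rule finite_alex) simp

lemma indisc_alex: "alexandroff_space (indisc a b)"
  by (rule finite_alex) simp

lemma sierp_t0: "t0_space (sierp a b)"
  unfolding t0_space_def topspace_sierp
proof (intro ballI impI)
  fix x y assume "x \<in> {a,b}" "y \<in> {a,b}" "x \<noteq> y"
  then show "\<exists>U. openin (sierp a b) U \<and> (x \<notin> U \<longleftrightarrow> y \<in> U)"
    by (intro exI[of _ "{a}"]) (auto simp: openin_sierp)
qed

lemma sierp_not_spc: "a \<noteq> b \<Longrightarrow> \<not> spc (sierp a b) a b"
proof
  assume "a \<noteq> b" "spc (sierp a b) a b"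
  moreover have "openin (sierp a b) {a}" by (simp add: openin_sierp)
  ultimately show False unfolding spc_def by blast
qed



context
  fixes C :: "'b topology \<Rightarrow> bool" and I :: "'i set" and le Z z
  assumes D: "directed_mono_diagram C I le Z z"
begin

lemma DD: "(\<forall>i\<in>I. le i i) \<and>
     (\<forall>i\<in>I. \<forall>j\<in>I. le i j \<and> le j i \<longrightarrow> i = j) \<and>
     (\<forall>i\<in>I. \<forall>j\<in>I. \<forall>k\<in>I. le i j \<and> le j k \<longrightarrow> le i k) \<and>
     (\<forall>F. finite F \<and> F \<subseteq> I \<longrightarrow> (\<exists>u\<in>I. \<forall>i\<in>F. le i u)) \<and>
     (\<forall>i\<in>I. C (Z i)) \<and>
     (\<forall>i\<in>I. \<forall>j\<in>I. le i j \<longrightarrow> mono_in C (Z i) (Z j) (z i j)) \<and>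
     (\<forall>i\<in>I. \<forall>x\<in>topspace (Z i). z i i x = x) \<and>
     (\<forall>i\<in>I. \<forall>j\<in>I. \<forall>k\<in>I. le i j \<and> le j k \<longrightarrow>
        (\<forall>x\<in>topspace (Z i). z j k (z i j x) = z i k x))"
  using D unfolding directed_mono_diagram_def .

lemma dmd_refl: "i \<in> I \<Longrightarrow> le i i"
  using DD[THEN conjunct1] by (rule bspec)

lemma dmd_trans: "i \<in> I \<Longrightarrow> j \<in> I \<Longrightarrow> k \<in> I \<Longrightarrow> le i j \<Longrightarrow> le j k \<Longrightarrow> le i k"
  using DD[THEN conjunct2, THEN conjunct2, THEN conjunct1] by blast

lemma dmd_bound: "finite F \<Longrightarrow> F \<subseteq> I \<Longrightarrow> \<exists>u\<in>I. \<forall>i\<in>F. le i u"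
  using DD[THEN conjunct2, THEN conjunct2, THEN conjunct2, THEN conjunct1] by simp

lemma dmd_bound2: assumes "i \<in> I" "j \<in> I" shows "\<exists>k\<in>I. le i k \<and> le j k"
proof -
  have "finite {i,j}" "{i,j} \<subseteq> I" using assms by auto
  from dmd_bound[OF this] show ?thesis by simp
qed

lemma dmd_C: "i \<in> I \<Longrightarrow> C (Z i)"
  using DD[THEN conjunct2, THEN conjunct2, THEN conjunct2, THEN conjunct2, THEN conjunct1] by simp

lemma dmd_mono: "i \<in> I \<Longrightarrow> j \<in> I \<Longrightarrow> le i j \<Longrightarrow> mono_in C (Z i) (Z j) (z i j)"
  using DD[THEN conjunct2, THEN conjunct2, THEN conjunct2, THEN conjunct2, THEN conjunct2, THEN conjunct1] by simp

lemma dmd_cont: "i \<in> I \<Longrightarrow> j \<in> I \<Longrightarrow> le i j \<Longrightarrow> continuous_map (Z i) (Z j) (z i j)"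
  using dmd_mono unfolding mono_in_def by simp

lemma dmd_id: "i \<in> I \<Longrightarrow> x \<in> topspace (Z i) \<Longrightarrow> z i i x = x"
  using DD[THEN conjunct2, THEN conjunct2, THEN conjunct2, THEN conjunct2, THEN conjunct2, THEN conjunct2, THEN conjunct1] by simp

lemma dmd_comp: "i \<in> I \<Longrightarrow> j \<in> I \<Longrightarrow> k \<in> I \<Longrightarrow> le i j \<Longrightarrow> le j k \<Longrightarrow> x \<in> topspace (Z i)
   \<Longrightarrow> z j k (z i j x) = z i k x"
  using DD[THEN conjunct2, THEN conjunct2, THEN conjunct2, THEN conjunct2, THEN conjunct2, THEN conjunct2, THEN conjunct2] by blast

lemma dmd_top: "i \<in> I \<Longrightarrow> j \<in> I \<Longrightarrow> le i j \<Longrightarrow> x \<in> topspace (Z i) \<Longrightarrow> z i j x \<in> topspace (Z j)"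
  using dmd_cont[of i j] unfolding continuous_map_def by (simp add: Pi_iff)

context
  fixes L c
  assumes Col: "is_colimit_in C I le Z z L c"
begin

lemma CC: "C L \<and>
     (\<forall>i\<in>I. continuous_map (Z i) L (c i)) \<and>
     (\<forall>i\<in>I. \<forall>j\<in>I. le i j \<longrightarrow> (\<forall>x\<in>topspace (Z i). c j (z i j x) = c i x)) \<and>
     (\<forall>W d. C W \<and> (\<forall>i\<in>I. continuous_map (Z i) W (d i)) \<and>
        (\<forall>i\<in>I. \<forall>j\<in>I. le i j \<longrightarrow> (\<forall>x\<in>topspace (Z i). d j (z i j x) = d i x)) \<longrightarrow>
        (\<exists>u. continuous_map L W u \<and>
             (\<forall>i\<in>I. \<forall>x\<in>topspace (Z i). u (c i x) = d i x) \<and>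
             (\<forall>u'. continuous_map L W u' \<and>
                   (\<forall>i\<in>I. \<forall>x\<in>topspace (Z i). u' (c i x) = d i x) \<longrightarrow>
                   (\<forall>y\<in>topspace L. u' y = u y))))"
  using Col unfolding is_colimit_in_def .

lemma col_C: "C L"
  using CC by simp

lemma col_cont: "i \<in> I \<Longrightarrow> continuous_map (Z i) L (c i)"
  using CC by simp

lemma col_compat: "i \<in> I \<Longrightarrow> j \<in> I \<Longrightarrow> le i j \<Longrightarrow> x \<in> topspace (Z i) \<Longrightarrow> c j (z i j x) = c i x"
  using CC by simp

lemma col_univ:
  assumes "C W" "\<And>i. i \<in> I \<Longrightarrow> continuous_map (Z i) W (d i)"
    "\<And>i j x. i \<in> I \<Longrightarrow> j \<in> I \<Longrightarrow> le i j \<Longrightarrow> x \<in> topspace (Z i) \<Longrightarrow> d j (z i j x) = d i x"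
  shows "\<exists>u. continuous_map L W u \<and>
             (\<forall>i\<in>I. \<forall>x\<in>topspace (Z i). u (c i x) = d i x) \<and>
             (\<forall>u'. continuous_map L W u' \<and>
                   (\<forall>i\<in>I. \<forall>x\<in>topspace (Z i). u' (c i x) = d i x) \<longrightarrow>
                   (\<forall>y\<in>topspace L. u' y = u y))"
proof -
  have "C W \<and> (\<forall>i\<in>I. continuous_map (Z i) W (d i)) \<and>
        (\<forall>i\<in>I. \<forall>j\<in>I. le i j \<longrightarrow> (\<forall>x\<in>topspace (Z i). d j (z i j x) = d i x))"
    using assms by blast
  then show ?thesis using CC[THEN conjunct2, THEN conjunct2, THEN conjunct2, rule_format, of W d] by blast
qed

lemma col_surj:
  assumes hsub: "C (subtopology L (\<Union>i\<in>I. c i ` topspace (Z i)))" and y: "y \<in> topspace L"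
  shows "\<exists>i\<in>I. \<exists>x\<in>topspace (Z i). y = c i x"
proof -
  define S where "S = (\<Union>i\<in>I. c i ` topspace (Z i))"
  have cs: "continuous_map (Z i) (subtopology L S) (c i)" if "i \<in> I" for i
    unfolding continuous_map_in_subtopology using col_cont[OF that] that by (auto simp: S_def)
  obtain u where u: "continuous_map L (subtopology L S) u"
    "\<forall>i\<in>I. \<forall>x\<in>topspace (Z i). u (c i x) = c i x"
    using col_univ[of "subtopology L S" c] hsub cs col_compat unfolding S_def by blast
  obtain u0 where u0: "\<forall>u'. continuous_map L L u' \<and>
                   (\<forall>i\<in>I. \<forall>x\<in>topspace (Z i). u' (c i x) = c i x) \<longrightarrow>
                   (\<forall>y\<in>topspace L. u' y = u0 y)"
    using col_univ[of L c] col_C col_cont col_compat by blast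
  have "\<forall>y\<in>topspace L. (\<lambda>x. x) y = u0 y"
    using u0[rule_format, of "\<lambda>x. x"] continuous_map_id[unfolded id_def] by blast
  moreover have "\<forall>y\<in>topspace L. u y = u0 y"
    using u0[rule_format, of u] u continuous_map_into_fulltopology by blast
  ultimately have "y = u y" using y by simp
  moreover have "u y \<in> topspace (subtopology L S)"
    using u(1) y unfolding continuous_map_def by blast
  ultimately have "y \<in> S" by simp
  then show ?thesis unfolding S_def by blast
qed

lemma spc_sierp_a: "w \<in> {a,b} \<Longrightarrow> spc (sierp a b) w a"
  unfolding spc_def openin_sierp by auto

lemma sier_lemma:
  assumes hA: "\<And>i. i \<in> I \<Longrightarrow> alexandroff_space (Z i)" and hW: "C (sierp a b)"
    and i: "i \<in> I" and a: "a \<in> topspace (Z i)" and b: "b \<in> topspace (Z i)"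
    and s: "spc L (c i a) (c i b)"
  shows "\<exists>k\<in>I. le i k \<and> spc (Z k) (z i k a) (z i k b)"
proof (cases "a = b")
  case True
  then show ?thesis using i a dmd_refl dmd_id spc_refl by metis
next
  case False
  define U where "U j = {x\<in>topspace (Z j). \<exists>k\<in>I. le i k \<and> le j k \<and> spc (Z k) (z i k a) (z j k x)}" for j
  define d where "d j x = (if x \<in> U j then a else b)" for j x
  have up: "y \<in> U j" if j: "j \<in> I" and x: "x \<in> U j" and xy: "spc (Z j) x y" for j x y
  proof -
    obtain k where k: "k \<in> I" "le i k" "le j k" "spc (Z k) (z i k a) (z j k x)"
      using x unfolding U_def by blast
    have "spc (Z k) (z j k x) (z j k y)" using cont_spc[OF dmd_cont[OF j k(1) k(3)] xy] .
    then have "spc (Z k) (z i k a) (z j k y)" by (rule spc_trans[OF k(4)])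
    moreover have "y \<in> topspace (Z j)" using xy unfolding spc_def by blast
    ultimately show ?thesis unfolding U_def using k by blast
  qed
  have dcont: "continuous_map (Z j) (sierp a b) (d j)" if j: "j \<in> I" for j
  proof (rule alex_contI[OF hA[OF j]])
    show "d j x \<in> topspace (sierp a b)" for x by (simp add: d_def)
    fix x y assume xy: "spc (Z j) x y"
    show "spc (sierp a b) (d j x) (d j y)"
    proof (cases "y \<in> U j")
      case True
      then show ?thesis using spc_sierp_a[of "d j x" a b] by (simp add: d_def)
    next
      case False
      then have "x \<notin> U j" using up[OF j _ xy] by blast
      then show ?thesis using False spc_refl[of b "sierp a b"] by (simp add: d_def)
    qed
  qed
  have dcomp: "d j' (z j j' x) = d j x"
    if j: "j \<in> I" "j' \<in> I" "le j j'" and x: "x \<in> topspace (Z j)" for j j' x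
  proof -
    have "z j j' x \<in> U j' \<longleftrightarrow> x \<in> U j"
    proof
      assume "z j j' x \<in> U j'"
      then obtain k where k: "k \<in> I" "le i k" "le j' k" "spc (Z k) (z i k a) (z j' k (z j j' x))"
        unfolding U_def by blast
      have "le j k" using dmd_trans[OF j(1) j(2) k(1) j(3) k(3)] .
      moreover have "z j' k (z j j' x) = z j k x" using dmd_comp[OF j(1) j(2) k(1) j(3) k(3) x] .
      ultimately show "x \<in> U j" unfolding U_def using k x by auto
    next
      assume "x \<in> U j"
      then obtain k where k: "k \<in> I" "le i k" "le j k" "spc (Z k) (z i k a) (z j k x)"
        unfolding U_def by blast
      obtain k' where k': "k' \<in> I" "le k k'" "le j' k'" using dmd_bound2[OF k(1) j(2)] by blast
      have s': "spc (Z k') (z k k' (z i k a)) (z k k' (z j k x))"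
        using cont_spc[OF dmd_cont[OF k(1) k'(1) k'(2)] k(4)] .
      have e1: "z k k' (z i k a) = z i k' a" using dmd_comp[OF i k(1) k'(1) k(2) k'(2) a] .
      have e2: "z k k' (z j k x) = z j k' x" using dmd_comp[OF j(1) k(1) k'(1) k(3) k'(2) x] .
      have e3: "z j' k' (z j j' x) = z j k' x" using dmd_comp[OF j(1) j(2) k'(1) j(3) k'(3) x] .
      have "le i k'" using dmd_trans[OF i k(1) k'(1) k(2) k'(2)] .
      moreover have "z j j' x \<in> topspace (Z j')" using dmd_top j x by blast
      ultimately show "z j j' x \<in> U j'" unfolding U_def using s' e1 e2 e3 k' by auto
    qed
    then show ?thesis by (simp add: d_def)
  qed
  obtain u where u: "continuous_map L (sierp a b) u" "\<forall>j\<in>I. \<forall>x\<in>topspace (Z j). u (c j x) = d j x"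
    using col_univ[of "sierp a b" d] hW dcont dcomp by blast
  have aU: "a \<in> U i" unfolding U_def using i a dmd_refl dmd_id spc_refl by fastforce
  have "spc (sierp a b) (u (c i a)) (u (c i b))" using cont_spc[OF u(1) s] .
  then have "spc (sierp a b) a (d i b)" using u(2) i a b aU by (simp add: d_def)
  then have "b \<in> U i" using sierp_not_spc[OF False] by (auto simp: d_def split: if_splits)
  then show ?thesis unfolding U_def using i by blast
qed

lemma indisc_lemma:
  assumes hW: "C (indisc a b)"
    and i: "i \<in> I" and a: "a \<in> topspace (Z i)" and b: "b \<in> topspace (Z i)"
    and s: "c i a = c i b"
  shows "\<exists>k\<in>I. le i k \<and> z i k a = z i k b"
proof (cases "a = b")
  case True
  then show ?thesis using i dmd_refl by blast
next
  case False
  define U where "U j = {x\<in>topspace (Z j). \<exists>k\<in>I. le i k \<and> le j k \<and> z i k a = z j k x}" for j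
  define d where "d j x = (if x \<in> U j then a else b)" for j x
  have dcont: "continuous_map (Z j) (indisc a b) (d j)" if j: "j \<in> I" for j
    unfolding continuous_map_def
  proof (intro conjI allI impI)
    show "d j \<in> topspace (Z j) \<rightarrow> topspace (indisc a b)" by (simp add: d_def)
    fix V assume "openin (indisc a b) V"
    then have "V = {} \<or> V = {a,b}" unfolding openin_indisc by auto
    then show "openin (Z j) {x \<in> topspace (Z j). d j x \<in> V}"
    proof
      assume "V = {}" then show ?thesis by simp
    next
      assume "V = {a,b}"
      then have "{x \<in> topspace (Z j). d j x \<in> V} = topspace (Z j)" by (auto simp: d_def)
      then show ?thesis by simp
    qed
  qed
  have dcomp: "d j' (z j j' x) = d j x"
    if j: "j \<in> I" "j' \<in> I" "le j j'" and x: "x \<in> topspace (Z j)" for j j' x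
  proof -
    have "z j j' x \<in> U j' \<longleftrightarrow> x \<in> U j"
    proof
      assume "z j j' x \<in> U j'"
      then obtain k where k: "k \<in> I" "le i k" "le j' k" "z i k a = z j' k (z j j' x)"
        unfolding U_def by blast
      have "le j k" using dmd_trans[OF j(1) j(2) k(1) j(3) k(3)] .
      moreover have "z j' k (z j j' x) = z j k x" using dmd_comp[OF j(1) j(2) k(1) j(3) k(3) x] .
      ultimately show "x \<in> U j" unfolding U_def using k x by auto
    next
      assume "x \<in> U j"
      then obtain k where k: "k \<in> I" "le i k" "le j k" "z i k a = z j k x"
        unfolding U_def by blast
      obtain k' where k': "k' \<in> I" "le k k'" "le j' k'" using dmd_bound2[OF k(1) j(2)] by blast
      have s': "z k k' (z i k a) = z k k' (z j k x)" using k(4) by simp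
      have e1: "z k k' (z i k a) = z i k' a" using dmd_comp[OF i k(1) k'(1) k(2) k'(2) a] .
      have e2: "z k k' (z j k x) = z j k' x" using dmd_comp[OF j(1) k(1) k'(1) k(3) k'(2) x] .
      have e3: "z j' k' (z j j' x) = z j k' x" using dmd_comp[OF j(1) j(2) k'(1) j(3) k'(3) x] .
      have "le i k'" using dmd_trans[OF i k(1) k'(1) k(2) k'(2)] .
      moreover have "z j j' x \<in> topspace (Z j')" using dmd_top j x by blast
      ultimately show "z j j' x \<in> U j'" unfolding U_def using s' e1 e2 e3 k' by auto
    qed
    then show ?thesis by (simp add: d_def)
  qed
  obtain u where u: "continuous_map L (indisc a b) u" "\<forall>j\<in>I. \<forall>x\<in>topspace (Z j). u (c j x) = d j x"
    using col_univ[of "indisc a b" d] hW dcont dcomp by blast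
  have aU: "a \<in> U i" unfolding U_def using i a dmd_refl dmd_id by fastforce
  have "u (c i a) = a" using u(2) i a aU by (simp add: d_def)
  moreover have "u (c i b) = d i b" using u(2) i b by simp
  ultimately have "d i b = a" using s by simp
  then have "b \<in> U i" using False by (auto simp: d_def split: if_splits)
  then show ?thesis unfolding U_def using i by blast
qed

end
end



lemma transport_spc:
  assumes D: "directed_mono_diagram C I le Z z"
    and i: "i \<in> I" and k: "k \<in> I" and k3: "k3 \<in> I" and ik: "le i k" and kk3: "le k k3"
    and a: "a \<in> topspace (Z i)" and b: "b \<in> topspace (Z i)"
    and s: "spc (Z k) (z i k a) (z i k b)"
  shows "spc (Z k3) (z i k3 a) (z i k3 b)"
proof -
  have "spc (Z k3) (z k k3 (z i k a)) (z k k3 (z i k b))"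
    using cont_spc[OF dmd_cont[OF D k k3 kk3] s] .
  moreover have "z k k3 (z i k a) = z i k3 a" using dmd_comp[OF D i k k3 ik kk3 a] .
  moreover have "z k k3 (z i k b) = z i k3 b" using dmd_comp[OF D i k k3 ik kk3 b] .
  ultimately show ?thesis by simp
qed

lemma eq_lemma:
  fixes C :: "'b topology \<Rightarrow> bool"
  assumes D: "directed_mono_diagram C I le Z z" and Col: "is_colimit_in C I le Z z L c"
    and hA: "\<And>W. C W \<Longrightarrow> alexandroff_space W"
    and hS: "\<And>a b. a \<noteq> b \<Longrightarrow> C (sierp a b)"
    and heq: "(\<forall>a b. a \<noteq> b \<longrightarrow> C (indisc a b)) \<or> (\<forall>W. C W \<longrightarrow> t0_space W)"
    and i: "i \<in> I" and a: "a \<in> topspace (Z i)" and b: "b \<in> topspace (Z i)"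
    and s: "c i a = c i b"
  shows "\<exists>k\<in>I. le i k \<and> z i k a = z i k b"
proof (cases "a = b")
  case True
  then show ?thesis using i dmd_refl[OF D] by blast
next
  case False
  show ?thesis
  proof (cases "\<forall>a b. a \<noteq> b \<longrightarrow> C (indisc a b)")
    case True
    then show ?thesis using indisc_lemma[OF D Col _ i a b s] False by blast
  next
    case nT: False
    then have t0: "\<And>W. C W \<Longrightarrow> t0_space W" using heq by blast
    have hAZ: "\<And>j. j \<in> I \<Longrightarrow> alexandroff_space (Z j)" using hA dmd_C[OF D] by blast
    have ca: "c i a \<in> topspace L" using col_cont[OF D Col i] a unfolding continuous_map_def by auto
    have s1: "spc L (c i a) (c i b)" using spc_refl[OF ca] s by simp
    have s2: "spc L (c i b) (c i a)" using spc_refl[OF ca] s by simp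
    obtain k1 where k1: "k1 \<in> I" "le i k1" "spc (Z k1) (z i k1 a) (z i k1 b)"
      using sier_lemma[OF D Col hAZ hS[OF False] i a b s1] by blast
    have "b \<noteq> a" using False by simp
    obtain k2 where k2: "k2 \<in> I" "le i k2" "spc (Z k2) (z i k2 b) (z i k2 a)"
      using sier_lemma[OF D Col hAZ hS[OF \<open>b \<noteq> a\<close>] i b a s2] by blast
    obtain k3 where k3: "k3 \<in> I" "le k1 k3" "le k2 k3" using dmd_bound2[OF D k1(1) k2(1)] by blast
    have t1: "spc (Z k3) (z i k3 a) (z i k3 b)"
      using transport_spc[OF D i k1(1) k3(1) k1(2) k3(2) a b k1(3)] .
    have t2: "spc (Z k3) (z i k3 b) (z i k3 a)"
      using transport_spc[OF D i k2(1) k3(1) k2(2) k3(3) b a k2(3)] .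
    have "t0_space (Z k3)" using t0 dmd_C[OF D k3(1)] by blast
    then have "z i k3 a = z i k3 b" by (rule t0_spc[OF _ t1 t2])
    moreover have "le i k3" using dmd_trans[OF D i k1(1) k3(1) k1(2) k3(2)] .
    ultimately show ?thesis using k3(1) by blast
  qed
qed

lemma sier_lemma':
  fixes C :: "'b topology \<Rightarrow> bool"
  assumes D: "directed_mono_diagram C I le Z z" and Col: "is_colimit_in C I le Z z L c"
    and hA: "\<And>W. C W \<Longrightarrow> alexandroff_space W"
    and hS: "\<And>a b. a \<noteq> b \<Longrightarrow> C (sierp a b)"
    and i: "i \<in> I" and a: "a \<in> topspace (Z i)" and b: "b \<in> topspace (Z i)"
    and s: "spc L (c i a) (c i b)"
  shows "\<exists>k\<in>I. le i k \<and> spc (Z k) (z i k a) (z i k b)"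
proof (cases "a = b")
  case True
  have "spc (Z i) (z i i a) (z i i b)" using True a dmd_id[OF D i a] spc_refl by metis
  then show ?thesis using i dmd_refl[OF D i] by blast
next
  case False
  have hAZ: "\<And>j. j \<in> I \<Longrightarrow> alexandroff_space (Z j)" using hA dmd_C[OF D] by blast
  show ?thesis using sier_lemma[OF D Col hAZ hS[OF False] i a b s] .
qed

lemma fin_gen_of_finite:
  fixes C :: "'b topology \<Rightarrow> bool" and X :: "'a topology"
  assumes fin: "finite (topspace X)"
    and hA: "\<And>W. C W \<Longrightarrow> alexandroff_space W"
    and hsub: "\<And>W S. C W \<Longrightarrow> C (subtopology W S)"
    and hS: "\<And>a b. a \<noteq> b \<Longrightarrow> C (sierp a b)"
    and heq: "(\<forall>a b. a \<noteq> b \<longrightarrow> C (indisc a b)) \<or> (\<forall>W. C W \<longrightarrow> t0_space W)"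
  shows "fin_gen TYPE('i) C X"
  unfolding fin_gen_def
proof (intro allI impI)
  fix I :: "'i set" and le Z z L c f
  assume DC: "directed_mono_diagram C I le Z z \<and> is_colimit_in C I le Z z L c"
    and f: "continuous_map X L f"
  have D: "directed_mono_diagram C I le Z z" using DC by (rule conjunct1)
  have Col: "is_colimit_in C I le Z z L c" using DC by (rule conjunct2)
  have hsubL: "C (subtopology L (\<Union>i\<in>I. c i ` topspace (Z i)))" using hsub col_C[OF D Col] by blast
  have fx: "\<And>x. x \<in> topspace X \<Longrightarrow> f x \<in> topspace L" using f unfolding continuous_map_def by auto
  show "(\<exists>i\<in>I. \<exists>g. continuous_map X (Z i) g \<and> (\<forall>x\<in>topspace X. f x = c i (g x))) \<and>
        (\<forall>i\<in>I. \<forall>g g'. continuous_map X (Z i) g \<and> continuous_map X (Z i) g' \<and>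
               (\<forall>x\<in>topspace X. f x = c i (g x)) \<and> (\<forall>x\<in>topspace X. f x = c i (g' x)) \<longrightarrow>
               (\<exists>j\<in>I. le i j \<and> (\<forall>x\<in>topspace X. z i j (g x) = z i j (g' x))))"
  proof (rule conjI)
    have "\<forall>x\<in>topspace X. \<exists>i. i \<in> I \<and> (\<exists>a\<in>topspace (Z i). f x = c i a)"
      using col_surj[OF D Col hsubL] fx by blast
    from bchoice[OF this] obtain ix where ix: "\<forall>x\<in>topspace X. ix x \<in> I \<and> (\<exists>a\<in>topspace (Z (ix x)). f x = c (ix x) a)"
      by blast
    then have "\<forall>x\<in>topspace X. \<exists>a. a \<in> topspace (Z (ix x)) \<and> f x = c (ix x) a" by blast
    from bchoice[OF this] obtain ax where ax: "\<forall>x\<in>topspace X. ax x \<in> topspace (Z (ix x)) \<and> f x = c (ix x) (ax x)"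
      by blast
    have "finite (ix ` topspace X)" "ix ` topspace X \<subseteq> I" using fin ix by auto
    from dmd_bound[OF D this] obtain i0 where i0: "i0 \<in> I" "\<forall>x\<in>topspace X. le (ix x) i0" by blast
    define g0 where "g0 x = z (ix x) i0 (ax x)" for x
    have g0top: "g0 x \<in> topspace (Z i0)" if "x \<in> topspace X" for x
      unfolding g0_def using dmd_top[OF D _ i0(1) _ ] ix ax i0 that by blast
    have g0f: "c i0 (g0 x) = f x" if x: "x \<in> topspace X" for x
    proof -
      have "c i0 (g0 x) = c (ix x) (ax x)"
        unfolding g0_def using col_compat[OF D Col _ i0(1)] ix ax i0 x by blast
      then show ?thesis using ax x by simp
    qed
    define P where "P = {p \<in> topspace X \<times> topspace X. spc X (fst p) (snd p)}"
    have "\<forall>p\<in>P. \<exists>k. k \<in> I \<and> le i0 k \<and> spc (Z k) (z i0 k (g0 (fst p))) (z i0 k (g0 (snd p)))"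
    proof
      fix p assume p: "p \<in> P"
      then have xy: "spc X (fst p) (snd p)" "fst p \<in> topspace X" "snd p \<in> topspace X"
        unfolding P_def by auto
      have "spc L (f (fst p)) (f (snd p))" using cont_spc[OF f xy(1)] .
      then have "spc L (c i0 (g0 (fst p))) (c i0 (g0 (snd p)))" using g0f xy by simp
      from sier_lemma'[OF D Col hA hS i0(1) g0top[OF xy(2)] g0top[OF xy(3)] this]
      show "\<exists>k. k \<in> I \<and> le i0 k \<and> spc (Z k) (z i0 k (g0 (fst p))) (z i0 k (g0 (snd p)))" by blast
    qed
    from bchoice[OF this] obtain kp where kp:
      "\<forall>p\<in>P. kp p \<in> I \<and> le i0 (kp p) \<and> spc (Z (kp p)) (z i0 (kp p) (g0 (fst p))) (z i0 (kp p) (g0 (snd p)))"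
      by blast
    have "finite P" unfolding P_def using fin by (simp add: finite_subset[of _ "topspace X \<times> topspace X"])
    then have "finite (insert i0 (kp ` P))" "insert i0 (kp ` P) \<subseteq> I" using kp i0 by auto
    from dmd_bound[OF D this] obtain K where K: "K \<in> I" "le i0 K" "\<forall>p\<in>P. le (kp p) K" by blast
    define g where "g x = z i0 K (g0 x)" for x
    have gc: "continuous_map X (Z K) g"
    proof (rule alex_contI[OF finite_alex[OF fin]])
      show "g x \<in> topspace (Z K)" if "x \<in> topspace X" for x
        unfolding g_def using dmd_top[OF D i0(1) K(1) K(2) g0top[OF that]] .
      fix x y assume xy: "spc X x y"
      then have xt: "x \<in> topspace X" "y \<in> topspace X" unfolding spc_def by auto
      then have p: "(x,y) \<in> P" unfolding P_def using xy by simp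
      then have k: "kp (x,y) \<in> I" "le i0 (kp (x,y))" "le (kp (x,y)) K"
        "spc (Z (kp (x,y))) (z i0 (kp (x,y)) (g0 x)) (z i0 (kp (x,y)) (g0 y))"
        using kp K by auto
      show "spc (Z K) (g x) (g y)" unfolding g_def
        using transport_spc[OF D i0(1) k(1) K(1) k(2) k(3) g0top[OF xt(1)] g0top[OF xt(2)] k(4)] .
    qed
    have "f x = c K (g x)" if x: "x \<in> topspace X" for x
      unfolding g_def using col_compat[OF D Col i0(1) K(1) K(2) g0top[OF x]] g0f[OF x] by simp
    then show "\<exists>i\<in>I. \<exists>g. continuous_map X (Z i) g \<and> (\<forall>x\<in>topspace X. f x = c i (g x))"
      using gc K(1) by blast
  next
    show "\<forall>i\<in>I. \<forall>g g'. continuous_map X (Z i) g \<and> continuous_map X (Z i) g' \<and>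
               (\<forall>x\<in>topspace X. f x = c i (g x)) \<and> (\<forall>x\<in>topspace X. f x = c i (g' x)) \<longrightarrow>
               (\<exists>j\<in>I. le i j \<and> (\<forall>x\<in>topspace X. z i j (g x) = z i j (g' x)))"
    proof (intro ballI allI impI)
      fix i g g' assume i: "i \<in> I" and H: "continuous_map X (Z i) g \<and> continuous_map X (Z i) g' \<and>
               (\<forall>x\<in>topspace X. f x = c i (g x)) \<and> (\<forall>x\<in>topspace X. f x = c i (g' x))"
      have gt: "g x \<in> topspace (Z i)" "g' x \<in> topspace (Z i)" if "x \<in> topspace X" for x
        using H that unfolding continuous_map_def by auto
      have "\<forall>x\<in>topspace X. \<exists>k. k \<in> I \<and> le i k \<and> z i k (g x) = z i k (g' x)"
      proof
        fix x assume x: "x \<in> topspace X"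
        have "c i (g x) = c i (g' x)" using H x by metis
        from eq_lemma[OF D Col hA hS heq i gt[OF x] this]
        show "\<exists>k. k \<in> I \<and> le i k \<and> z i k (g x) = z i k (g' x)" by blast
      qed
      from bchoice[OF this] obtain kx where kx:
        "\<forall>x\<in>topspace X. kx x \<in> I \<and> le i (kx x) \<and> z i (kx x) (g x) = z i (kx x) (g' x)" by blast
      have "finite (insert i (kx ` topspace X))" "insert i (kx ` topspace X) \<subseteq> I" using fin kx i by auto
      from dmd_bound[OF D this] obtain j where j: "j \<in> I" "le i j" "\<forall>x\<in>topspace X. le (kx x) j" by blast
      have "z i j (g x) = z i j (g' x)" if x: "x \<in> topspace X" for x
      proof -
        have k: "kx x \<in> I" "le i (kx x)" "z i (kx x) (g x) = z i (kx x) (g' x)" "le (kx x) j"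
          using kx j x by auto
        have "z i j (g x) = z (kx x) j (z i (kx x) (g x))"
          using dmd_comp[OF D i k(1) j(1) k(2) k(4) gt(1)[OF x]] by simp
        also have "\<dots> = z (kx x) j (z i (kx x) (g' x))" using k(3) by simp
        also have "\<dots> = z i j (g' x)"
          using dmd_comp[OF D i k(1) j(1) k(2) k(4) gt(2)[OF x]] by simp
        finally show ?thesis .
      qed
      then show "\<exists>j\<in>I. le i j \<and> (\<forall>x\<in>topspace X. z i j (g x) = z i j (g' x))" using j by blast
    qed
  qed
qed

lemma finite_of_fin_gen:
  fixes C :: "'a topology \<Rightarrow> bool" and X :: "'a topology"
  assumes hA: "\<And>W. C W \<Longrightarrow> alexandroff_space W" and CX: "C X"
    and hsub: "\<And>W S. C W \<Longrightarrow> C (subtopology W S)"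
    and fg: "fin_gen TYPE('a set) C X"
  shows "finite (topspace X)"
proof -
  define I where "I = {F. finite F \<and> F \<subseteq> topspace X}"
  define le :: "'a set \<Rightarrow> 'a set \<Rightarrow> bool" where "le = (\<lambda>F G. F \<subseteq> G)"
  define Z where "Z = (\<lambda>F. subtopology X F)"
  define z :: "'a set \<Rightarrow> 'a set \<Rightarrow> 'a \<Rightarrow> 'a" where "z = (\<lambda>F G x. x)"
  define c :: "'a set \<Rightarrow> 'a \<Rightarrow> 'a" where "c = (\<lambda>F x. x)"
  have cid: "continuous_map X X (\<lambda>x. x)" using continuous_map_id[unfolded id_def] .
  have idc: "continuous_map (subtopology X F) (subtopology X G) (\<lambda>x. x)" if "F \<subseteq> G" for F G
    unfolding continuous_map_in_subtopology
    using continuous_map_from_subtopology[OF cid] that by auto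
  have D: "directed_mono_diagram C I le Z z"
    unfolding directed_mono_diagram_def
  proof (intro conjI)
    show "\<forall>i\<in>I. le i i" by (simp add: le_def)
    show "\<forall>i\<in>I. \<forall>j\<in>I. le i j \<and> le j i \<longrightarrow> i = j" by (auto simp: le_def)
    show "\<forall>i\<in>I. \<forall>j\<in>I. \<forall>k\<in>I. le i j \<and> le j k \<longrightarrow> le i k" by (auto simp: le_def)
    show "\<forall>F. finite F \<and> F \<subseteq> I \<longrightarrow> (\<exists>u\<in>I. \<forall>i\<in>F. le i u)"
    proof (intro allI impI)
      fix F assume F: "finite F \<and> F \<subseteq> I"
      then have "\<Union>F \<in> I" unfolding I_def by auto
      then show "\<exists>u\<in>I. \<forall>i\<in>F. le i u" unfolding le_def by blast
    qed
    show "\<forall>i\<in>I. C (Z i)" unfolding Z_def using hsub CX by blast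
    show "\<forall>i\<in>I. \<forall>j\<in>I. le i j \<longrightarrow> mono_in C (Z i) (Z j) (z i j)"
      unfolding mono_in_def Z_def z_def le_def using idc by simp
    show "\<forall>i\<in>I. \<forall>x\<in>topspace (Z i). z i i x = x" by (simp add: z_def)
    show "\<forall>i\<in>I. \<forall>j\<in>I. \<forall>k\<in>I. le i j \<and> le j k \<longrightarrow>
        (\<forall>x\<in>topspace (Z i). z j k (z i j x) = z i k x)" by (simp add: z_def)
  qed
  have Col: "is_colimit_in C I le Z z X c"
    unfolding is_colimit_in_def
  proof (intro conjI)
    show "C X" by (rule CX)
    show "\<forall>i\<in>I. continuous_map (Z i) X (c i)"
      unfolding Z_def c_def using continuous_map_from_subtopology[OF cid] by blast
    show "\<forall>i\<in>I. \<forall>j\<in>I. le i j \<longrightarrow> (\<forall>x\<in>topspace (Z i). c j (z i j x) = c i x)"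
      by (simp add: c_def z_def)
    show "\<forall>W d. C W \<and> (\<forall>i\<in>I. continuous_map (Z i) W (d i)) \<and>
        (\<forall>i\<in>I. \<forall>j\<in>I. le i j \<longrightarrow> (\<forall>x\<in>topspace (Z i). d j (z i j x) = d i x)) \<longrightarrow>
        (\<exists>u. continuous_map X W u \<and>
             (\<forall>i\<in>I. \<forall>x\<in>topspace (Z i). u (c i x) = d i x) \<and>
             (\<forall>u'. continuous_map X W u' \<and>
                   (\<forall>i\<in>I. \<forall>x\<in>topspace (Z i). u' (c i x) = d i x) \<longrightarrow>
                   (\<forall>y\<in>topspace X. u' y = u y)))"
    proof (intro allI impI)
      fix W d assume H: "C W \<and> (\<forall>i\<in>I. continuous_map (Z i) W (d i)) \<and>
        (\<forall>i\<in>I. \<forall>j\<in>I. le i j \<longrightarrow> (\<forall>x\<in>topspace (Z i). d j (z i j x) = d i x))"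
      have dc: "continuous_map (subtopology X F) W (d F)" if "F \<in> I" for F
        using H that unfolding Z_def by blast
      have dcomp: "d G x = d F x" if FG: "F \<in> I" "G \<in> I" "F \<subseteq> G" "x \<in> topspace X" "x \<in> F" for F G x
      proof -
        have "le F G" using FG(3) unfolding le_def .
        moreover have "x \<in> topspace (Z F)" unfolding Z_def using FG by simp
        ultimately have "d G (z F G x) = d F x"
          using H[THEN conjunct2, THEN conjunct2, rule_format, of F G x] FG(1,2) by blast
        then show ?thesis unfolding z_def .
      qed
      have sing: "{x} \<in> I" if "x \<in> topspace X" for x unfolding I_def using that by auto
      define u where "u x = d {x} x" for x
      have ucont: "continuous_map X W u"
      proof (rule alex_contI[OF hA[OF CX]])
        fix x assume x: "x \<in> topspace X"
        have "x \<in> topspace (subtopology X {x})" using x by simp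
        then show "u x \<in> topspace W" unfolding u_def
          using dc[OF sing[OF x]] unfolding continuous_map_def by blast
      next
        fix x y assume xy: "spc X x y"
        then have xt: "x \<in> topspace X" "y \<in> topspace X" unfolding spc_def by auto
        have FI: "{x,y} \<in> I" unfolding I_def using xt by auto
        have ux: "u x = d {x,y} x" unfolding u_def using dcomp[OF sing[OF xt(1)] FI] xt by simp
        have uy: "u y = d {x,y} y" unfolding u_def using dcomp[OF sing[OF xt(2)] FI] xt by simp
        have "spc (subtopology X {x,y}) x y"
          unfolding spc_def openin_subtopology using xy xt unfolding spc_def by auto
        from cont_spc[OF dc[OF FI] this] show "spc W (u x) (u y)" using ux uy by simp
      qed
      have ucomp: "\<forall>i\<in>I. \<forall>x\<in>topspace (Z i). u (c i x) = d i x"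
      proof (intro ballI)
        fix F x assume F: "F \<in> I" and x: "x \<in> topspace (Z F)"
        then have xt: "x \<in> topspace X" "x \<in> F" unfolding Z_def by auto
        show "u (c F x) = d F x" unfolding u_def c_def
          using dcomp[OF sing[OF xt(1)] F] xt by simp
      qed
      have uuniq: "\<forall>u'. continuous_map X W u' \<and>
                   (\<forall>i\<in>I. \<forall>x\<in>topspace (Z i). u' (c i x) = d i x) \<longrightarrow>
                   (\<forall>y\<in>topspace X. u' y = u y)"
      proof (intro allI impI ballI)
        fix u' y assume H': "continuous_map X W u' \<and> (\<forall>i\<in>I. \<forall>x\<in>topspace (Z i). u' (c i x) = d i x)"
          and y: "y \<in> topspace X"
        have "y \<in> topspace (Z {y})" unfolding Z_def using y by simp
        then show "u' y = u y" using H' sing[OF y] unfolding u_def c_def by blast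
      qed
      show "\<exists>u. continuous_map X W u \<and>
             (\<forall>i\<in>I. \<forall>x\<in>topspace (Z i). u (c i x) = d i x) \<and>
             (\<forall>u'. continuous_map X W u' \<and>
                   (\<forall>i\<in>I. \<forall>x\<in>topspace (Z i). u' (c i x) = d i x) \<longrightarrow>
                   (\<forall>y\<in>topspace X. u' y = u y))"
        using ucont ucomp uuniq by blast
    qed
  qed
  have "\<exists>i\<in>I. \<exists>g. continuous_map X (Z i) g \<and> (\<forall>x\<in>topspace X. x = c i (g x))"
    using fg[unfolded fin_gen_def, rule_format, OF conjI[OF D Col] cid] by (rule conjunct1)
  then obtain F g where F: "F \<in> I" and g: "continuous_map X (Z F) g" "\<forall>x\<in>topspace X. x = c F (g x)"
    by blast
  have "topspace X \<subseteq> F"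
  proof
    fix x assume x: "x \<in> topspace X"
    have "g x \<in> topspace (Z F)" using g(1) x unfolding continuous_map_def by auto
    then show "x \<in> F" using g(2) x unfolding Z_def c_def by auto
  qed
  then show ?thesis using F unfolding I_def by (auto intro: finite_subset)
qed


theorem proposition8p5:
  fixes X :: "'a topology"
  shows "(alexandroff_space X \<longrightarrow>
            ((finite (topspace X) \<longrightarrow> fin_gen TYPE('i) (alexandroff_space :: 'b topology \<Rightarrow> bool) X) \<and>
             (fin_gen TYPE('a set) (alexandroff_space :: 'a topology \<Rightarrow> bool) X \<longrightarrow> finite (topspace X))))
       \<and> (alex0_space X \<longrightarrow>
            ((finite (topspace X) \<longrightarrow> fin_gen TYPE('i) (alex0_space :: 'b topology \<Rightarrow> bool) X) \<and>
             (fin_gen TYPE('a set) (alex0_space :: 'a topology \<Rightarrow> bool) X \<longrightarrow> finite (topspace X))))"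
proof (intro conjI impI)
  assume "alexandroff_space X" "finite (topspace X)"
  show "fin_gen TYPE('i) (alexandroff_space :: 'b topology \<Rightarrow> bool) X"
  proof (rule fin_gen_of_finite)
    show "finite (topspace X)" by fact
    show "\<And>W S. alexandroff_space (W::'b topology) \<Longrightarrow> alexandroff_space (subtopology W S)"
      by (rule alex_subtopology)
    show "\<And>a b::'b. a \<noteq> b \<Longrightarrow> alexandroff_space (sierp a b)" by (rule sierp_alex)
    show "(\<forall>a b::'b. a \<noteq> b \<longrightarrow> alexandroff_space (indisc a b)) \<or> (\<forall>W::'b topology. alexandroff_space W \<longrightarrow> t0_space W)"
      by (intro disjI1 allI impI) (rule indisc_alex)
  qed
next
  assume "alexandroff_space X" "fin_gen TYPE('a set) (alexandroff_space :: 'a topology \<Rightarrow> bool) X"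
  then show "finite (topspace X)"
    using finite_of_fin_gen[of alexandroff_space X] alex_subtopology by blast
next
  assume A0: "alex0_space X" "finite (topspace X)"
  show "fin_gen TYPE('i) (alex0_space :: 'b topology \<Rightarrow> bool) X"
  proof (rule fin_gen_of_finite)
    show "finite (topspace X)" by fact
    show "\<And>W. alex0_space (W::'b topology) \<Longrightarrow> alexandroff_space W" by (simp add: alex0_space_def)
    show "\<And>W S. alex0_space (W::'b topology) \<Longrightarrow> alex0_space (subtopology W S)"
      by (simp add: alex0_space_def alex_subtopology t0_space_subtopology)
    show "\<And>a b::'b. a \<noteq> b \<Longrightarrow> alex0_space (sierp a b)" by (simp add: alex0_space_def sierp_alex sierp_t0)
    show "(\<forall>a b::'b. a \<noteq> b \<longrightarrow> alex0_space (indisc a b)) \<or> (\<forall>W::'b topology. alex0_space W \<longrightarrow> t0_space W)"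
      by (simp add: alex0_space_def)
  qed
next
  assume "alex0_space X" "fin_gen TYPE('a set) (alex0_space :: 'a topology \<Rightarrow> bool) X"
  moreover have "\<And>W. alex0_space (W::'a topology) \<Longrightarrow> alexandroff_space W" by (simp add: alex0_space_def)
  moreover have "\<And>W S. alex0_space (W::'a topology) \<Longrightarrow> alex0_space (subtopology W S)"
    by (simp add: alex0_space_def alex_subtopology t0_space_subtopology)
  ultimately show "finite (topspace X)"
    using finite_of_fin_gen[of alex0_space X] by blast
qed

end
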